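(* Let $m \geq 1$ be an integer, let $\lambda_0 \geq 0 > \lambda_1 \geq \lambda_2 \geq \lambda_3$ be real numbers and let $z_1, \ldots, z_m$ be complex numbers with $z_j = a_j + b_j i$, $a_j \in \mathbb{R}$, $b_j > 0$ for $j = 1, \ldots, m$. If $\lambda_0 + \sum_{j=1}^3 \lambda_j - 2\sum_{j=1}^m |z_j| \geq 0$, then there is a $(2m+4) \times (2m+4)$ normal centrosymmetric nonnegative matrix with eigenvalues $\lambda_0, \lambda_1, \lambda_2, \lambda_3, z_1, \ldots, z_m, \overline{z}_1, \ldots, \overline{z}_m$.
   Context: $J$ denotes the reverse identity matrix of the appropriate size (ones on the anti-diagonal, zeros elsewhere). A square matrix $Q$ is centrosymmetric if $JQJ = Q$, nonnegative if all entries are nonnegative, and normal if $QQ^* = Q^*Q$. *)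

theory Defs
  imports "Jordan_Normal_Form.Char_Poly" "HOL-Computational_Algebra.Polynomial"
begin

definition rev_id_mat :: "nat \<Rightarrow> 'a :: {zero,one} mat" where
  "rev_id_mat n = mat n n (\<lambda>(i,j). if i + j = n - 1 then 1 else 0)"

definition centrosymmetric :: "'a :: comm_ring_1 mat \<Rightarrow> bool" where
  "centrosymmetric Q \<longleftrightarrow> rev_id_mat (dim_row Q) * Q * rev_id_mat (dim_row Q) = Q"

definition nonneg_mat :: "real mat \<Rightarrow> bool" where
  "nonneg_mat Q \<longleftrightarrow> (\<forall>i < dim_row Q. \<forall>j < dim_col Q. Q $$ (i,j) \<ge> 0)"

definition normal_real_mat :: "real mat \<Rightarrow> bool" where
  "normal_real_mat Q \<longleftrightarrow> Q * transpose_mat Q = transpose_mat Q * Q"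

text \<open>The (complex) eigenvalues of a real square matrix, counted with algebraic multiplicity,
  are exactly the entries of the list L.\<close>
definition has_eigenvalues :: "real mat \<Rightarrow> complex list \<Rightarrow> bool" where
  "has_eigenvalues Q L \<longleftrightarrow>
     char_poly (map_mat complex_of_real Q) = (\<Prod>a\<leftarrow>L. [:- a, 1:])"

end

theory Submission
  imports Defs
begin

lemma cis_sum_zero:
  fixes N :: nat and k :: int
  assumes N: "N > 0" and nd: "\<not> int N dvd k"
  shows "(\<Sum>u<N. cis (2*pi*real_of_int k * real u / real N)) = 0"
proof -
  define q where "q = cis (2*pi*real_of_int k / real N)"
  have qu: "cis (2*pi*real_of_int k * real u / real N) = q ^ u" for u
    unfolding q_def DeMoivre by (simp add: field_simps)
  have qN: "q ^ N = 1"
  proof -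
    have "q ^ N = cis (2*pi*real_of_int k)" unfolding q_def DeMoivre using N by (simp add: field_simps)
    also have "\<dots> = 1" using cis_multiple_2pi[of "real_of_int k"] by simp
    finally show ?thesis .
  qed
  have q1: "q \<noteq> 1"
  proof
    assume "q = 1"
    hence "cos (2*pi*real_of_int k / real N) = 1" unfolding q_def
      by (metis cis.simps(1) one_complex.simps(1))
    then obtain j :: int where j: "2*pi*real_of_int k / real N = real_of_int j * 2 * pi"
      using cos_one_2pi_int by blast
    hence "real_of_int k = real_of_int j * real N" using N by (simp add: field_simps)
    hence "k = j * int N" by (metis of_int_eq_iff of_int_mult of_int_of_nat_eq)
    thus False using nd by simp
  qed
  have "(\<Sum>u<N. cis (2*pi*real_of_int k * real u / real N)) = (\<Sum>u<N. q ^ u)"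
    using qu by simp
  also have "\<dots> = 0" using geometric_sum[OF q1, of N] qN by simp
  finally show ?thesis .
qed

definition gT :: "nat \<Rightarrow> nat \<Rightarrow> nat" where
  "gT m x = (if x < m then x else 3*m+3-x)"

lemma sum_split_ST:
  fixes F :: "nat \<Rightarrow> 'a::comm_monoid_add"
  shows "(\<Sum>i<2*m+4. F i) = (\<Sum>j<4. F (m+j)) + (\<Sum>u<2*m. F (gT m u))"
proof -
  have a: "{..<2*m+4} = {..<m} \<union> {m..<m+4} \<union> {m+4..<2*m+4}" by auto
  have "(\<Sum>i<2*m+4. F i) = (\<Sum>i<m. F i) + (\<Sum>i\<in>{m..<m+4}. F i) + (\<Sum>i\<in>{m+4..<2*m+4}. F i)"
    unfolding a by (subst sum.union_disjoint, auto, subst sum.union_disjoint, auto)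
  moreover have "(\<Sum>i\<in>{m..<m+4}. F i) = (\<Sum>j<4. F (m+j))"
    by (rule sum.reindex_bij_witness[where j="\<lambda>i. i - m" and i="\<lambda>j. m+j"]) auto
  moreover have "(\<Sum>u<2*m. F (gT m u)) = (\<Sum>u<m. F u) + (\<Sum>u\<in>{m..<2*m}. F (3*m+3-u))"
  proof -
    have b: "{..<2*m} = {..<m} \<union> {m..<2*m}" by auto
    have "(\<Sum>u<2*m. F (gT m u)) = (\<Sum>u<m. F (gT m u)) + (\<Sum>u\<in>{m..<2*m}. F (gT m u))"
      unfolding b by (rule sum.union_disjoint) auto
    moreover have "(\<Sum>u<m. F (gT m u)) = (\<Sum>u<m. F u)" by (rule sum.cong) (auto simp: gT_def)
    moreover have "(\<Sum>u\<in>{m..<2*m}. F (gT m u)) = (\<Sum>u\<in>{m..<2*m}. F (3*m+3-u))"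
      by (rule sum.cong) (auto simp: gT_def)
    ultimately show ?thesis by simp
  qed
  moreover have "(\<Sum>u\<in>{m..<2*m}. F (3*m+3-u)) = (\<Sum>i\<in>{m+4..<2*m+4}. F i)"
    by (rule sum.reindex_bij_witness[where i="\<lambda>i. 3*m+3-i" and j="\<lambda>u. 3*m+3-u"]) auto
  ultimately show ?thesis by (simp add: add.assoc add.commute add.left_commute)
qed

definition h1 :: "nat \<Rightarrow> real" where "h1 j = (if j < 2 then 1 else -1)"
definition h2 :: "nat \<Rightarrow> real" where "h2 j = (if even j then 1 else -1)"
definition h3 :: "nat \<Rightarrow> real" where "h3 j = (if j = 0 \<or> j = 3 then 1 else -1)"

definition colv :: "nat \<Rightarrow> real \<Rightarrow> real \<Rightarrow> nat \<Rightarrow> nat \<Rightarrow> complex" where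
"colv m c s k i = (if m \<le> i \<and> i < m+4 then
   (if k = 0 then Complex (c/2) 0
    else if k = 1 then Complex (s/(2*sqrt 2)) (h3 (i-m)/(2*sqrt 2))
    else if k = 2 then Complex (s/(2*sqrt 2)) (- h3 (i-m)/(2*sqrt 2))
    else if k = 3 then Complex (h1 (i-m)/2) 0
    else if k = 4 then Complex (h2 (i-m)/2) 0
    else 0)
 else
   (if k = 0 then Complex (s / sqrt (2*m)) 0
    else if k = 1 \<or> k = 2 then Complex (- c / (sqrt 2 * sqrt (2*m))) 0
    else if k \<le> 4 then 0
    else cis (2*pi*real (k-4) * real (gT m i) / real (2*m)) / complex_of_real (sqrt (2*m))))"

lemma gT_gT: "u < 2*m \<Longrightarrow> gT m (gT m u) = u" by (auto simp: gT_def)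
lemma gT_notS: "u < 2*m \<Longrightarrow> \<not> (m \<le> gT m u \<and> gT m u < m+4)" by (auto simp: gT_def)

lemma colv_S: "j < 4 \<Longrightarrow> colv m c s k (m+j) =
   (if k = 0 then Complex (c/2) 0
    else if k = 1 then Complex (s/(2*sqrt 2)) (h3 j/(2*sqrt 2))
    else if k = 2 then Complex (s/(2*sqrt 2)) (- h3 j/(2*sqrt 2))
    else if k = 3 then Complex (h1 j/2) 0
    else if k = 4 then Complex (h2 j/2) 0
    else 0)"
  by (simp add: colv_def)

lemma colv_T: "u < 2*m \<Longrightarrow> colv m c s k (gT m u) =
   (if k = 0 then Complex (s / sqrt (2*m)) 0
    else if k = 1 \<or> k = 2 then Complex (- c / (sqrt 2 * sqrt (2*m))) 0
    else if k \<le> 4 then 0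
    else cis (2*pi*real (k-4) * real u / real (2*m)) / complex_of_real (sqrt (2*m)))"
proof -
  assume u: "u < 2*m"
  have "\<not> (m \<le> gT m u \<and> gT m u < m + 4)" using gT_notS[OF u] .
  thus ?thesis by (simp only: colv_def if_not_P gT_gT[OF u] if_False)
qed

lemma sum4: "(\<Sum>j<(4::nat). f j) = f 0 + f 1 + f 2 + (f 3 :: 'a::comm_monoid_add)"
  by (simp add: eval_nat_numeral add.assoc)

lemma inner_small:
  assumes m: "m \<ge> 1" and cs: "c^2 + s^2 = 1" and k: "k \<le> 4" and k': "k' \<le> 4"
  shows "(\<Sum>i<2*m+4. cnj (colv m c s k i) * colv m c s k' i) = (if k = k' then 1 else 0)"
proof -
  have sq2: "sqrt 2 * sqrt 2 = (2::real)" by simp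
  have sqm: "sqrt (real (2*m)) * sqrt (real (2*m)) = real (2*m)" by simp
  have mpos: "real (2*m) > 0" using m by simp
  have T: "(\<Sum>u<2*m. cnj (colv m c s k (gT m u)) * colv m c s k' (gT m u))
      = of_nat (2*m) * (cnj (colv m c s k (gT m 0)) * colv m c s k' (gT m 0))"
  proof -
    have "(\<Sum>u<2*m. cnj (colv m c s k (gT m u)) * colv m c s k' (gT m u))
       = (\<Sum>u<2*m. cnj (colv m c s k (gT m 0)) * colv m c s k' (gT m 0))"
      by (rule sum.cong, simp, subst colv_T, simp, subst colv_T, simp,
          subst colv_T, use m in simp, subst colv_T, use m in simp, use k k' in simp)
    thus ?thesis by simp
  qed
  have cs32: "c * (c * 32) + s * (s * 32) = 32" using cs by (simp add: power2_eq_square algebra_simps)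
  have kk: "k \<in> {0,1,2,3,4}" "k' \<in> {0,1,2,3,4}" using k k' by auto
  show ?thesis
    unfolding sum_split_ST T
    using kk
    apply (simp only: sum4 colv_S colv_T[OF mult_pos_pos] insert_iff empty_iff)
    using m apply (elim disjE)
    apply (simp_all add: colv_S colv_T h1_def h2_def h3_def complex_eq_iff field_simps sq2 sqm)
    using cs32 by simp_all
qed

lemma cis_sum_delta:
  fixes N f f' :: nat
  assumes N: "N > 0" and f: "f < N" and f': "f' < N"
  shows "(\<Sum>u<N. cnj (cis (2*pi*real f*real u/real N)) * cis (2*pi*real f'*real u/real N))
         = (if f = f' then of_nat N else 0)"
proof -
  have e: "cnj (cis (2*pi*real f*real u/real N)) * cis (2*pi*real f'*real u/real N)
        = cis (2*pi*real_of_int (int f' - int f)*real u/real N)" for u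
  proof -
    have "cnj (cis (2*pi*real f*real u/real N)) * cis (2*pi*real f'*real u/real N)
        = cis (2*pi*real f'*real u/real N - 2*pi*real f*real u/real N)"
      by (simp add: cis_cnj cis_mult)
    also have "\<dots> = cis (2*pi*real_of_int (int f' - int f)*real u/real N)"
      by (rule arg_cong[where f=cis]) (simp add: diff_divide_distrib algebra_simps)
    finally show ?thesis .
  qed
  show ?thesis
  proof (cases "f = f'")
    case True thus ?thesis unfolding e by simp
  next
    case False
    have "\<not> int N dvd (int f' - int f)"
    proof
      assume "int N dvd (int f' - int f)"
      hence "\<bar>int N\<bar> \<le> \<bar>int f' - int f\<bar>" using False by (intro dvd_imp_le_int) auto
      moreover have "\<bar>int f' - int f\<bar> < int N" using f f' by linarith
      ultimately show False by simp
    qed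
    from cis_sum_zero[OF N this] show ?thesis unfolding e using False by simp
  qed
qed

lemma cis_sum_zero_nat:
  fixes N f :: nat
  assumes N: "N > 0" and f: "0 < f" "f < N"
  shows "(\<Sum>u<N. cis (2*pi*real f*real u/real N)) = 0"
proof -
  have "\<not> int N dvd int f" using f by (simp add: nat_dvd_not_less)
  from cis_sum_zero[OF N this] show ?thesis by simp
qed

lemma inner_all:
  assumes m: "m \<ge> 1" and cs: "c^2 + s^2 = 1" and k: "k < 2*m+4" and k': "k' < 2*m+4"
  shows "(\<Sum>i<2*m+4. cnj (colv m c s k i) * colv m c s k' i) = (if k = k' then 1 else 0)"
proof -
  have N: "2*m > 0" using m by simp
  have sqm: "complex_of_real (sqrt (real (2*m))) * complex_of_real (sqrt (real (2*m))) = of_nat (2*m)"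
  proof -
    have "sqrt (real (2*m)) * sqrt (real (2*m)) = real (2*m)" by simp
    thus ?thesis by (simp only: of_real_mult[symmetric] of_real_of_nat_eq)
  qed
  have sqm0: "complex_of_real (sqrt (real (2*m))) \<noteq> 0" using m by simp
  show ?thesis
  proof (cases "k \<le> 4 \<and> k' \<le> 4")
    case True thus ?thesis using inner_small[OF m cs] by auto
  next
    case False
    have S0: "(\<Sum>j<4. cnj (colv m c s k (m+j)) * colv m c s k' (m+j)) = 0"
      by (rule sum.neutral) (use False in \<open>auto simp: colv_S\<close>)
    show ?thesis
    proof (cases "k \<le> 4")
      case True
      hence k'5: "k' \<ge> 5" using False by auto
      have "(\<Sum>u<2*m. cnj (colv m c s k (gT m u)) * colv m c s k' (gT m u))
          = (\<Sum>u<2*m. cnj (colv m c s k (gT m 0)) * (cis (2*pi*real (k'-4) * real u / real (2*m)) / complex_of_real (sqrt (2*m))))"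
        by (rule sum.cong, simp, subst colv_T, simp, subst colv_T, simp,
          subst colv_T, use m in simp, use True k'5 in simp)
      also have "\<dots> = cnj (colv m c s k (gT m 0)) / complex_of_real (sqrt (2*m)) * (\<Sum>u<2*m. cis (2*pi*real (k'-4) * real u / real (2*m)))"
        by (simp add: sum_distrib_left)
      also have "\<dots> = 0" using cis_sum_zero_nat[OF N, of "k'-4"] k'5 k' by simp
      finally show ?thesis unfolding sum_split_ST S0 using True k'5 by simp
    next
      case False
      hence k5: "k \<ge> 5" by auto
      show ?thesis
      proof (cases "k' \<le> 4")
        case True
        have "(\<Sum>u<2*m. cnj (colv m c s k (gT m u)) * colv m c s k' (gT m u))
          = (\<Sum>u<2*m. cnj (cis (2*pi*real (k-4) * real u / real (2*m)) / complex_of_real (sqrt (2*m))) * colv m c s k' (gT m 0))"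
          by (rule sum.cong, simp, subst colv_T, simp, subst colv_T, simp,
            subst colv_T, use m in simp, use True k5 in simp)
        also have "\<dots> = cnj (1 / complex_of_real (sqrt (2*m)) * (\<Sum>u<2*m. cis (2*pi*real (k-4) * real u / real (2*m)))) * colv m c s k' (gT m 0)"
          by (simp add: sum_distrib_left sum_distrib_right cnj_sum)
        also have "\<dots> = 0" using cis_sum_zero_nat[OF N, of "k-4"] k5 k by simp
        finally show ?thesis unfolding sum_split_ST S0 using True k5 by simp
      next
        case False
        hence k'5: "k' \<ge> 5" by auto
        have "(\<Sum>u<2*m. cnj (colv m c s k (gT m u)) * colv m c s k' (gT m u))
          = (\<Sum>u<2*m. cnj (cis (2*pi*real (k-4) * real u / real (2*m))) * cis (2*pi*real (k'-4) * real u / real (2*m))) / of_nat (2*m)"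
          unfolding sum_divide_distrib
          by (rule sum.cong, simp, subst colv_T, simp, subst colv_T, simp, use k5 k'5 sqm in simp)
        also have "\<dots> = (if k = k' then 1 else 0)"
          using cis_sum_delta[OF N, of "k-4" "k'-4"] k5 k'5 k k' N by auto
        finally show ?thesis unfolding sum_split_ST S0 by simp
      qed
    qed
  qed
qed

definition Umat :: "nat \<Rightarrow> real \<Rightarrow> real \<Rightarrow> complex mat" where
  "Umat m c s = mat (2*m+4) (2*m+4) (\<lambda>(i,k). colv m c s k i)"
definition Hmat :: "nat \<Rightarrow> real \<Rightarrow> real \<Rightarrow> complex mat" where
  "Hmat m c s = mat (2*m+4) (2*m+4) (\<lambda>(k,i). cnj (colv m c s k i))"

lemma Umat_carrier: "Umat m c s \<in> carrier_mat (2*m+4) (2*m+4)" by (simp add: Umat_def)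
lemma Hmat_carrier: "Hmat m c s \<in> carrier_mat (2*m+4) (2*m+4)" by (simp add: Hmat_def)

lemma HU:
  assumes m: "m \<ge> 1" and cs: "c^2 + s^2 = 1"
  shows "Hmat m c s * Umat m c s = 1\<^sub>m (2*m+4)"
proof (rule eq_matI)
  fix k k' assume k: "k < dim_row (1\<^sub>m (2*m+4))" and k': "k' < dim_col (1\<^sub>m (2*m+4))"
  have "(Hmat m c s * Umat m c s) $$ (k,k') = (\<Sum>i<2*m+4. cnj (colv m c s k i) * colv m c s k' i)"
    using k k' by (simp add: Hmat_def Umat_def scalar_prod_def atLeast0LessThan)
  also have "\<dots> = (if k = k' then 1 else 0)" using inner_all[OF m cs] k k' by simp
  finally show "(Hmat m c s * Umat m c s) $$ (k,k') = 1\<^sub>m (2*m+4) $$ (k,k')" using k k' by simp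
qed (auto simp: Hmat_def Umat_def)

lemma UH:
  assumes m: "m \<ge> 1" and cs: "c^2 + s^2 = 1"
  shows "Umat m c s * Hmat m c s = 1\<^sub>m (2*m+4)"
  by (rule mat_mult_left_right_inverse[OF Hmat_carrier Umat_carrier HU[OF m cs]])

definition mu :: "nat \<Rightarrow> real \<Rightarrow> (nat \<Rightarrow> complex) \<Rightarrow> nat \<Rightarrow> complex" where
  "mu m l3 z f = (if f < m then z f else if f = m then complex_of_real l3 else cnj (z (2*m - f)))"

definition ev :: "nat \<Rightarrow> real \<Rightarrow> real \<Rightarrow> real \<Rightarrow> real \<Rightarrow> (nat \<Rightarrow> complex) \<Rightarrow> nat \<Rightarrow> complex" where
  "ev m l0 l1 l2 l3 z k = (if k = 0 then complex_of_real l0 else if k = 1 then z m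
     else if k = 2 then cnj (z m) else if k = 3 then complex_of_real l1
     else if k = 4 then complex_of_real l2 else mu m l3 z (k - 4))"

definition Lam :: "nat \<Rightarrow> real \<Rightarrow> real \<Rightarrow> real \<Rightarrow> real \<Rightarrow> (nat \<Rightarrow> complex) \<Rightarrow> complex mat" where
  "Lam m l0 l1 l2 l3 z = mat (2*m+4) (2*m+4) (\<lambda>(i,j). if i = j then ev m l0 l1 l2 l3 z i else 0)"

lemma Lam_carrier: "Lam m l0 l1 l2 l3 z \<in> carrier_mat (2*m+4) (2*m+4)" by (simp add: Lam_def)

lemma diag_mult_right:
  assumes A: "A \<in> carrier_mat n n" and i: "i < n" and k: "k < n"
  shows "(A * mat n n (\<lambda>(i,j). if i = j then d i else 0)) $$ (i,k) = A $$ (i,k) * (d k :: 'a::comm_ring_1)"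
proof -
  have "(A * mat n n (\<lambda>(i,j). if i = j then d i else 0)) $$ (i,k)
      = (\<Sum>j<n. A $$ (i,j) * (if j = k then d k else 0))"
    using A i k by (simp add: scalar_prod_def atLeast0LessThan cong: if_cong)
  also have "\<dots> = A $$ (i,k) * d k" using k by (simp add: if_distrib cong: if_cong)
  finally show ?thesis .
qed

definition Ac :: "nat \<Rightarrow> real \<Rightarrow> real \<Rightarrow> real \<Rightarrow> real \<Rightarrow> real \<Rightarrow> real \<Rightarrow> (nat \<Rightarrow> complex) \<Rightarrow> complex mat" where
  "Ac m c s l0 l1 l2 l3 z = Umat m c s * Lam m l0 l1 l2 l3 z * Hmat m c s"

lemma Ac_carrier: "Ac m c s l0 l1 l2 l3 z \<in> carrier_mat (2*m+4) (2*m+4)"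
  unfolding Ac_def by (rule mult_carrier_mat[OF mult_carrier_mat[OF Umat_carrier Lam_carrier] Hmat_carrier])

lemma Ac_entry:
  assumes i: "i < 2*m+4" and l: "l < 2*m+4"
  shows "Ac m c s l0 l1 l2 l3 z $$ (i,l) = (\<Sum>k<2*m+4. colv m c s k i * ev m l0 l1 l2 l3 z k * cnj (colv m c s k l))"
proof -
  have UL: "(Umat m c s * Lam m l0 l1 l2 l3 z) $$ (i,k) = colv m c s k i * ev m l0 l1 l2 l3 z k" if "k < 2*m+4" for k
    using diag_mult_right[OF Umat_carrier i that] unfolding Lam_def by (simp add: Umat_def i that)
  have "Ac m c s l0 l1 l2 l3 z $$ (i,l) = (\<Sum>k<2*m+4. (Umat m c s * Lam m l0 l1 l2 l3 z) $$ (i,k) * cnj (colv m c s k l))"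
    unfolding Ac_def using i l by (simp add: Hmat_def Umat_def Lam_def scalar_prod_def atLeast0LessThan)
  also have "\<dots> = (\<Sum>k<2*m+4. colv m c s k i * ev m l0 l1 l2 l3 z k * cnj (colv m c s k l))"
    by (rule sum.cong) (auto simp: UL)
  finally show ?thesis .
qed

lemma prod_list_upt: "prod_list (map g [a..<b]) = prod g {a..<b}"
  by (subst prod.distinct_set_conv_list[symmetric]) auto

lemma charpoly_Lam:
  "char_poly (Lam m l0 l1 l2 l3 z) = (\<Prod>k<2*m+4. [:- ev m l0 l1 l2 l3 z k, 1:])"
proof -
  have ut: "upper_triangular (Lam m l0 l1 l2 l3 z)"
    by (rule upper_triangularI) (simp add: Lam_def)
  have "diag_mat (Lam m l0 l1 l2 l3 z) = map (ev m l0 l1 l2 l3 z) [0..<2*m+4]"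
    by (simp add: diag_mat_def Lam_def list_eq_iff_nth_eq)
  thus ?thesis using char_poly_upper_triangular[OF Lam_carrier ut]
    by (simp add: prod_list_upt atLeast0LessThan)
qed

lemma prod_target:
  fixes h :: "complex \<Rightarrow> 'a::comm_monoid_mult"
  assumes m: "m \<ge> 1"
  shows "(\<Prod>k<2*m+4. h (ev m l0 l1 l2 l3 z k)) =
    prod_list (map h ([complex_of_real l0, complex_of_real l1, complex_of_real l2, complex_of_real l3]
              @ map z [1..<m+1] @ map (\<lambda>j. cnj (z j)) [1..<m+1]))"
proof -
  have split1: "{..<2*m+4} = {0,1,2,3,4} \<union> {5..<2*m+4}" using m by auto
  have "(\<Prod>k<2*m+4. h (ev m l0 l1 l2 l3 z k)) =
      h (of_real l0) * h (z m) * h (cnj (z m)) * h (of_real l1) * h (of_real l2) *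
      (\<Prod>k\<in>{5..<2*m+4}. h (mu m l3 z (k-4)))"
    unfolding split1 by (subst prod.union_disjoint) (auto simp: ev_def mult.assoc)
  also have "(\<Prod>k\<in>{5..<2*m+4}. h (mu m l3 z (k-4))) = (\<Prod>f\<in>{1..<2*m}. h (mu m l3 z f))"
    by (rule prod.reindex_bij_witness[where i="\<lambda>f. f+4" and j="\<lambda>k. k-4"]) auto
  also have "\<dots> = (\<Prod>f\<in>{1..<m}. h (z f)) * h (of_real l3) * (\<Prod>f\<in>{m+1..<2*m}. h (cnj (z (2*m-f))))"
  proof -
    have sp: "{1..<2*m} = {1..<m} \<union> {m} \<union> {m+1..<2*m}" using m by auto
    have "(\<Prod>f\<in>{1..<2*m}. h (mu m l3 z f)) = (\<Prod>f\<in>{1..<m}. h (mu m l3 z f)) * h (mu m l3 z m) * (\<Prod>f\<in>{m+1..<2*m}. h (mu m l3 z f))"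
      unfolding sp by (subst prod.union_disjoint, auto)+ (simp add: ac_simps)
    moreover have "(\<Prod>f\<in>{1..<m}. h (mu m l3 z f)) = (\<Prod>f\<in>{1..<m}. h (z f))"
      by (rule prod.cong) (auto simp: mu_def)
    moreover have "(\<Prod>f\<in>{m+1..<2*m}. h (mu m l3 z f)) = (\<Prod>f\<in>{m+1..<2*m}. h (cnj (z (2*m-f))))"
      by (rule prod.cong) (auto simp: mu_def)
    ultimately show ?thesis by (simp add: mu_def)
  qed
  also have "(\<Prod>f\<in>{m+1..<2*m}. h (cnj (z (2*m-f)))) = (\<Prod>j\<in>{1..<m}. h (cnj (z j)))"
    by (rule prod.reindex_bij_witness[where i="\<lambda>j. 2*m-j" and j="\<lambda>f. 2*m-f"]) auto
  finally have L: "(\<Prod>k<2*m+4. h (ev m l0 l1 l2 l3 z k)) =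
      h (of_real l0) * h (z m) * h (cnj (z m)) * h (of_real l1) * h (of_real l2) *
      ((\<Prod>f\<in>{1..<m}. h (z f)) * h (of_real l3) * (\<Prod>j\<in>{1..<m}. h (cnj (z j))))" .
  have sp2: "{1..<m+1} = insert m {1..<m}" using m by auto
  have R: "prod_list (map h ([complex_of_real l0, complex_of_real l1, complex_of_real l2, complex_of_real l3]
              @ map z [1..<m+1] @ map (\<lambda>j. cnj (z j)) [1..<m+1])) =
     h (of_real l0) * h (of_real l1) * h (of_real l2) * h (of_real l3) *
     (h (z m) * (\<Prod>f\<in>{1..<m}. h (z f))) * (h (cnj (z m)) * (\<Prod>j\<in>{1..<m}. h (cnj (z j))))"
  proof -
    have r1: "prod_list (map h (map z [1..<m+1])) = h (z m) * (\<Prod>f\<in>{1..<m}. h (z f))"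
      by (simp only: map_map prod_list_upt sp2, simp add: mult.commute)
    have r2: "prod_list (map h (map (\<lambda>j. cnj (z j)) [1..<m+1])) = h (cnj (z m)) * (\<Prod>f\<in>{1..<m}. h (cnj (z f)))"
      by (simp only: map_map prod_list_upt sp2, simp add: mult.commute)
    show ?thesis by (simp only: map_append prod_list.append r1 r2) (simp add: ac_simps)
  qed
  show ?thesis unfolding L R by (simp add: ac_simps)
qed

definition Fs :: "nat \<Rightarrow> real \<Rightarrow> (nat \<Rightarrow> complex) \<Rightarrow> int \<Rightarrow> complex" where
  "Fs m l3 z d = (\<Sum>f\<in>{1..<2*m}. mu m l3 z f * cis (2*pi*real f*real_of_int d/real (2*m)))"

lemma mu_cnj: "f \<in> {1..<2*m} \<Longrightarrow> cnj (mu m l3 z (2*m - f)) = mu m l3 z f"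
  by (auto simp: mu_def)

lemma cis_shift_int: "cis (x + 2*pi*real_of_int d) = cis x"
proof -
  have "cis (x + 2*pi*real_of_int d) = cis x * cis (2*pi*real_of_int d)" by (simp only: cis_mult)
  also have "\<dots> = cis x * 1" using cis_multiple_2pi[of "real_of_int d"] by simp
  finally show ?thesis by simp
qed

lemma Fs_cnj: assumes m: "m \<ge> 1" shows "cnj (Fs m l3 z d) = Fs m l3 z d"
proof -
  have "cnj (Fs m l3 z d) = (\<Sum>f\<in>{1..<2*m}. cnj (mu m l3 z f) * cis (- (2*pi*real f*real_of_int d/real (2*m))))"
    unfolding Fs_def by (simp add: cnj_sum cis_cnj)
  also have "\<dots> = Fs m l3 z d" unfolding Fs_def
  proof (rule sum.reindex_bij_witness[where i="\<lambda>f. 2*m-f" and j="\<lambda>f. 2*m-f"])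
    fix f assume f: "f \<in> {1..<2*m}"
    have "cis (2*pi*real (2*m-f)*real_of_int d/real (2*m))
        = cis (- (2*pi*real f*real_of_int d/real (2*m)) + 2*pi*real_of_int d)"
      using f m by (intro arg_cong[where f=cis]) (simp add: of_nat_diff field_simps)
    also have "\<dots> = cis (- (2*pi*real f*real_of_int d/real (2*m)))" by (rule cis_shift_int)
    finally have e: "cis (2*pi*real (2*m-f)*real_of_int d/real (2*m)) = cis (- (2*pi*real f*real_of_int d/real (2*m)))" .
    have "mu m l3 z (2*m-f) = cnj (mu m l3 z f)" using mu_cnj[OF f] by (metis complex_cnj_cnj)
    thus "mu m l3 z (2*m-f) * cis (2*pi*real (2*m-f)*real_of_int d/real (2*m)) =
        cnj (mu m l3 z f) * cis (- (2*pi*real f*real_of_int d/real (2*m)))" using e by simp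
  qed auto
  finally show ?thesis .
qed

lemma Fs_real: assumes m: "m \<ge> 1" shows "Fs m l3 z d = complex_of_real (Re (Fs m l3 z d))"
  using Fs_cnj[OF m, of l3 z d] by (simp add: complex_eq_iff)

lemma Fs_periodic: "Fs m l3 z (d + int (2*m)) = Fs m l3 z d"
  unfolding Fs_def
proof (rule sum.cong)
  fix f assume f: "f \<in> {1..<2*m}"
  have "cis (2*pi*real f*real_of_int (d + int (2*m))/real (2*m))
      = cis (2*pi*real f*real_of_int d/real (2*m) + 2*pi*real_of_int (int f))"
    using f by (intro arg_cong[where f=cis]) (simp add: field_simps)
  also have "\<dots> = cis (2*pi*real f*real_of_int d/real (2*m))" by (rule cis_shift_int)
  finally show "mu m l3 z f * cis (2*pi*real f*real_of_int (d + int (2*m))/real (2*m)) =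
     mu m l3 z f * cis (2*pi*real f*real_of_int d/real (2*m))" by simp
qed simp

lemma Fs_bound:
  assumes m: "m \<ge> 1"
  shows "cmod (Fs m l3 z d) \<le> \<bar>l3\<bar> + 2 * (\<Sum>j\<in>{1..<m}. cmod (z j))"
proof -
  have "cmod (Fs m l3 z d) \<le> (\<Sum>f\<in>{1..<2*m}. cmod (mu m l3 z f))"
    unfolding Fs_def by (rule order_trans[OF norm_sum]) (simp add: norm_mult)
  also have "\<dots> = \<bar>l3\<bar> + 2 * (\<Sum>j\<in>{1..<m}. cmod (z j))"
  proof -
    have sp: "{1..<2*m} = {1..<m} \<union> {m} \<union> {m+1..<2*m}" using m by auto
    have "(\<Sum>f\<in>{1..<2*m}. cmod (mu m l3 z f)) = (\<Sum>f\<in>{1..<m}. cmod (mu m l3 z f)) + cmod (mu m l3 z m) + (\<Sum>f\<in>{m+1..<2*m}. cmod (mu m l3 z f))"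
      unfolding sp by (subst sum.union_disjoint, auto)+
    moreover have "(\<Sum>f\<in>{1..<m}. cmod (mu m l3 z f)) = (\<Sum>f\<in>{1..<m}. cmod (z f))"
      by (rule sum.cong) (auto simp: mu_def)
    moreover have "(\<Sum>f\<in>{m+1..<2*m}. cmod (mu m l3 z f)) = (\<Sum>f\<in>{m+1..<2*m}. cmod (z (2*m-f)))"
      by (rule sum.cong) (auto simp: mu_def)
    moreover have "(\<Sum>f\<in>{m+1..<2*m}. cmod (z (2*m-f))) = (\<Sum>j\<in>{1..<m}. cmod (z j))"
      by (rule sum.reindex_bij_witness[where i="\<lambda>j. 2*m-j" and j="\<lambda>f. 2*m-f"]) auto
    ultimately show ?thesis by (simp add: mu_def)
  qed
  finally show ?thesis .
qed

definition inS :: "nat \<Rightarrow> nat \<Rightarrow> bool" where "inS m i \<longleftrightarrow> m \<le> i \<and> i < m+4"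
definition pv :: "nat \<Rightarrow> real \<Rightarrow> real \<Rightarrow> nat \<Rightarrow> real" where
  "pv m c s i = (if inS m i then c/2 else s / sqrt (2*m))"
definition w1v :: "nat \<Rightarrow> nat \<Rightarrow> real" where "w1v m i = (if inS m i then h1 (i-m)/2 else 0)"
definition w2v :: "nat \<Rightarrow> nat \<Rightarrow> real" where "w2v m i = (if inS m i then h2 (i-m)/2 else 0)"
definition qv :: "nat \<Rightarrow> real \<Rightarrow> real \<Rightarrow> (nat \<Rightarrow> complex) \<Rightarrow> nat \<Rightarrow> nat \<Rightarrow> complex" where
  "qv m c s z i l = colv m c s 1 i * z m * cnj (colv m c s 1 l)"
definition Fp :: "nat \<Rightarrow> real \<Rightarrow> (nat \<Rightarrow> complex) \<Rightarrow> nat \<Rightarrow> nat \<Rightarrow> complex" where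
  "Fp m l3 z i l = (if inS m i \<or> inS m l then 0 else Fs m l3 z (int (gT m i) - int (gT m l)) / of_nat (2*m))"

lemma colv0: "colv m c s 0 i = complex_of_real (pv m c s i)"
  by (simp add: colv_def pv_def inS_def complex_eq_iff)
lemma colv2: "colv m c s 2 i = cnj (colv m c s 1 i)"
  by (simp add: colv_def complex_eq_iff)
lemma colv3: "colv m c s 3 i = complex_of_real (w1v m i)"
  by (simp add: colv_def w1v_def inS_def complex_eq_iff)
lemma colv4: "colv m c s 4 i = complex_of_real (w2v m i)"
  by (simp add: colv_def w2v_def inS_def complex_eq_iff)

lemma Fourier_part:
  assumes m: "m \<ge> 1"
  shows "(\<Sum>k\<in>{5..<2*m+4}. colv m c s k i * ev m l0 l1 l2 l3 z k * cnj (colv m c s k l)) = Fp m l3 z i l"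
proof (cases "inS m i \<or> inS m l")
  case True
  have "(\<Sum>k\<in>{5..<2*m+4}. colv m c s k i * ev m l0 l1 l2 l3 z k * cnj (colv m c s k l)) = 0"
    by (rule sum.neutral) (use True in \<open>auto simp: colv_def inS_def\<close>)
  thus ?thesis unfolding Fp_def using True by simp
next
  case False
  have sq: "complex_of_real (sqrt (real (2*m))) * complex_of_real (sqrt (real (2*m))) = of_nat (2*m)"
  proof -
    have "sqrt (real (2*m)) * sqrt (real (2*m)) = real (2*m)" by simp
    thus ?thesis by (simp only: of_real_mult[symmetric] of_real_of_nat_eq)
  qed
  have "(\<Sum>k\<in>{5..<2*m+4}. colv m c s k i * ev m l0 l1 l2 l3 z k * cnj (colv m c s k l))
     = (\<Sum>f\<in>{1..<2*m}. colv m c s (f+4) i * mu m l3 z f * cnj (colv m c s (f+4) l))"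
    by (rule sum.reindex_bij_witness[where i="\<lambda>f. f+4" and j="\<lambda>k. k-4"]) (auto simp: ev_def)
  also have "\<dots> = (\<Sum>f\<in>{1..<2*m}. mu m l3 z f * cis (2*pi*real f*real_of_int (int (gT m i) - int (gT m l))/real (2*m))) / of_nat (2*m)"
    unfolding sum_divide_distrib
  proof (rule sum.cong)
    fix f assume f: "f \<in> {1..<2*m}"
    have ci: "colv m c s (f+4) i = cis (2*pi*real f * real (gT m i) / real (2*m)) / complex_of_real (sqrt (2*m))"
      using False f by (simp only: colv_def if_not_P[of "m \<le> i \<and> i < m+4"] inS_def, simp)
    have cl: "colv m c s (f+4) l = cis (2*pi*real f * real (gT m l) / real (2*m)) / complex_of_real (sqrt (2*m))"
      using False f by (simp only: colv_def if_not_P[of "m \<le> l \<and> l < m+4"] inS_def, simp)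
    have e: "cis (2*pi*real f * real (gT m i) / real (2*m)) * cnj (cis (2*pi*real f * real (gT m l) / real (2*m)))
       = cis (2*pi*real f*real_of_int (int (gT m i) - int (gT m l))/real (2*m))"
    proof -
      have "cis (2*pi*real f * real (gT m i) / real (2*m)) * cnj (cis (2*pi*real f * real (gT m l) / real (2*m)))
          = cis (2*pi*real f * real (gT m i) / real (2*m) + - (2*pi*real f * real (gT m l) / real (2*m)))"
        by (simp only: cis_cnj cis_mult)
      also have "\<dots> = cis (2*pi*real f*real_of_int (int (gT m i) - int (gT m l))/real (2*m))"
        by (rule arg_cong[where f=cis]) (simp add: diff_divide_distrib algebra_simps)
      finally show ?thesis .
    qed
    show "colv m c s (f+4) i * mu m l3 z f * cnj (colv m c s (f+4) l) =
       mu m l3 z f * cis (2*pi*real f*real_of_int (int (gT m i) - int (gT m l))/real (2*m)) / of_nat (2*m)"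
      unfolding ci cl e[symmetric] sq[symmetric] by (simp add: field_simps)
  qed simp
  also have "\<dots> = Fp m l3 z i l" using False unfolding Fp_def Fs_def by simp
  finally show ?thesis .
qed

lemma Ac_decomp:
  assumes m: "m \<ge> 1" and i: "i < 2*m+4" and l: "l < 2*m+4"
  shows "Ac m c s l0 l1 l2 l3 z $$ (i,l) =
    complex_of_real (l0 * pv m c s i * pv m c s l + l1 * w1v m i * w1v m l + l2 * w2v m i * w2v m l)
    + (qv m c s z i l + cnj (qv m c s z i l)) + Fp m l3 z i l"
proof -
  have sp: "{..<2*m+4} = {0,1,2,3,4} \<union> {5..<2*m+4}" using m by auto
  show ?thesis
    unfolding Ac_entry[OF i l] sp
    apply (subst sum.union_disjoint, simp, simp, simp)
    apply (subst Fourier_part[OF m])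
    apply (simp add: colv0 colv2 colv3 colv4 qv_def ev_def)
    done
qed

definition Aent :: "nat \<Rightarrow> real \<Rightarrow> real \<Rightarrow> real \<Rightarrow> real \<Rightarrow> real \<Rightarrow> real \<Rightarrow> (nat \<Rightarrow> complex) \<Rightarrow> nat \<Rightarrow> nat \<Rightarrow> real" where
  "Aent m c s l0 l1 l2 l3 z i l = l0 * pv m c s i * pv m c s l + l1 * w1v m i * w1v m l + l2 * w2v m i * w2v m l
     + 2 * Re (qv m c s z i l) + Re (Fp m l3 z i l)"

lemma Fp_real: assumes m: "m \<ge> 1" shows "Fp m l3 z i l = complex_of_real (Re (Fp m l3 z i l))"
proof -
  have "Im (Fp m l3 z i l) = 0" unfolding Fp_def using Fs_real[OF m, of l3 z]
    by (simp, metis Im_complex_of_real)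
  thus ?thesis by (simp add: complex_eq_iff)
qed

lemma Ac_real:
  assumes m: "m \<ge> 1" and i: "i < 2*m+4" and l: "l < 2*m+4"
  shows "Ac m c s l0 l1 l2 l3 z $$ (i,l) = complex_of_real (Aent m c s l0 l1 l2 l3 z i l)"
proof -
  have q: "qv m c s z i l + cnj (qv m c s z i l) = complex_of_real (2 * Re (qv m c s z i l))"
    by (simp add: complex_eq_iff)
  show ?thesis unfolding Ac_decomp[OF m i l] q Aent_def
    by (subst Fp_real[OF m]) simp
qed

lemma Aent_lower:
  "Aent m c s l0 l1 l2 l3 z i l \<ge> l0 * pv m c s i * pv m c s l
    - \<bar>l1\<bar> * \<bar>w1v m i\<bar> * \<bar>w1v m l\<bar> - \<bar>l2\<bar> * \<bar>w2v m i\<bar> * \<bar>w2v m l\<bar>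
    - 2 * (cmod (z m) * cmod (colv m c s 1 i) * cmod (colv m c s 1 l)) - cmod (Fp m l3 z i l)"
proof -
  have a: "l1 * w1v m i * w1v m l \<ge> - (\<bar>l1\<bar> * \<bar>w1v m i\<bar> * \<bar>w1v m l\<bar>)"
    by (metis abs_ge_minus_self abs_mult minus_le_iff)
  have b: "l2 * w2v m i * w2v m l \<ge> - (\<bar>l2\<bar> * \<bar>w2v m i\<bar> * \<bar>w2v m l\<bar>)"
    by (metis abs_ge_minus_self abs_mult minus_le_iff)
  have c: "Re (qv m c s z i l) \<ge> - (cmod (z m) * cmod (colv m c s 1 i) * cmod (colv m c s 1 l))"
  proof -
    have "- Re (qv m c s z i l) \<le> cmod (qv m c s z i l)"
      using abs_Re_le_cmod[of "qv m c s z i l"] by linarith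
    also have "cmod (qv m c s z i l) = cmod (z m) * cmod (colv m c s 1 i) * cmod (colv m c s 1 l)"
      by (simp add: qv_def norm_mult)
    finally show ?thesis by linarith
  qed
  have d: "Re (Fp m l3 z i l) \<ge> - cmod (Fp m l3 z i l)"
    using abs_Re_le_cmod[of "Fp m l3 z i l"] by linarith
  show ?thesis unfolding Aent_def using a b c d by linarith
qed

lemma h3_sq: "h3 j * h3 j = 1" by (simp add: h3_def)

lemma cmod_colv1_S: assumes "inS m i" shows "cmod (colv m c s 1 i) = sqrt (1 + s^2) / (2 * sqrt 2)"
proof -
  have "cmod (colv m c s 1 i) = sqrt ((s/(2*sqrt 2))^2 + (h3 (i-m)/(2*sqrt 2))^2)"
    using assms by (simp add: colv_def inS_def cmod_def)
  also have "(s/(2*sqrt 2))^2 + (h3 (i-m)/(2*sqrt 2))^2 = (1 + s^2) / 8"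
    by (simp add: power2_eq_square field_simps h3_sq)
  also have "sqrt ((1 + s^2) / 8) = sqrt (1 + s^2) / (2 * sqrt 2)"
  proof -
    have "sqrt (8::real) = 2 * sqrt 2"
      by (metis real_sqrt_mult real_sqrt_four mult_numeral_left_semiring_numeral num_double numeral_times_numeral)
    thus ?thesis by (simp add: real_sqrt_divide)
  qed
  finally show ?thesis .
qed

lemma cmod_colv1_T: assumes "\<not> inS m i" "c \<ge> 0" shows "cmod (colv m c s 1 i) = c / (sqrt 2 * sqrt (2*m))"
proof -
  have "\<not> (m \<le> i \<and> i < m+4)" using assms(1) by (simp add: inS_def)
  hence "colv m c s 1 i = Complex (- c / (sqrt 2 * sqrt (2*m))) 0"
    by (simp only: colv_def if_not_P, simp)
  thus ?thesis using assms(2) by (simp add: cmod_def)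
qed

lemma w_S: "inS m i \<Longrightarrow> \<bar>w1v m i\<bar> = 1/2 \<and> \<bar>w2v m i\<bar> = 1/2"
  by (simp add: w1v_def w2v_def h1_def h2_def)
lemma w_T: "\<not> inS m i \<Longrightarrow> w1v m i = 0 \<and> w2v m i = 0"
  by (simp add: w1v_def w2v_def)

lemma Fp_S: "inS m i \<or> inS m l \<Longrightarrow> Fp m l3 z i l = 0" by (simp add: Fp_def)
lemma Fp_T: assumes m: "m \<ge> 1"
  shows "cmod (Fp m l3 z i l) \<le> (\<bar>l3\<bar> + 2 * (\<Sum>j\<in>{1..<m}. cmod (z j))) / real (2*m)"
proof (cases "inS m i \<or> inS m l")
  case True thus ?thesis using Fp_S[OF True] m by (simp add: sum_nonneg)
next
  case False
  have "cmod (Fp m l3 z i l) = cmod (Fs m l3 z (int (gT m i) - int (gT m l))) / real (2*m)"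
    using False by (simp add: Fp_def norm_divide)
  also have "\<dots> \<le> (\<bar>l3\<bar> + 2 * (\<Sum>j\<in>{1..<m}. cmod (z j))) / real (2*m)"
    using Fs_bound[OF m] m by (intro divide_right_mono) auto
  finally show ?thesis .
qed

lemma Aent_nonneg:
  assumes m: "m \<ge> 1" and c: "c \<ge> 0" and s: "s \<ge> 0" and l0: "l0 \<ge> 0"
    and H1: "l0 * c^2 \<ge> \<bar>l1\<bar> + \<bar>l2\<bar> + cmod (z m) * (1 + s^2)"
    and H2: "l0 * s \<ge> cmod (z m) * sqrt (1 + s^2)"
    and H3: "l0 * s^2 \<ge> cmod (z m) * c^2 + \<bar>l3\<bar> + 2 * (\<Sum>j\<in>{1..<m}. cmod (z j))"
  shows "Aent m c s l0 l1 l2 l3 z i l \<ge> 0"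
proof -
  let ?Z = "cmod (z m)"
  let ?Y = "\<Sum>j\<in>{1..<m}. cmod (z j)"
  let ?t = "sqrt (1 + s^2)"
  let ?N = "real (2*m)"
  have N: "?N > 0" using m by simp
  have sq2: "sqrt 2 * sqrt 2 = (2::real)" by simp
  have sqm0: "sqrt (real m * 2) \<noteq> 0" using m by simp
  have sq2': "sqrt 2 * (sqrt 2 * x) = 2 * x" for x :: real by (simp add: mult.assoc[symmetric])
  have sqN: "sqrt ?N * sqrt ?N = ?N" by simp
  have tt: "?t * ?t = 1 + s^2" by simp
  note low = Aent_lower[of l0 m c s i l l1 l2 z l3]
  show ?thesis
  proof (cases "inS m i")
    case iS: True
    show ?thesis
    proof (cases "inS m l")
      case lS: True
      have "l0 * pv m c s i * pv m c s l = l0 * c^2 / 4" using iS lS by (simp add: pv_def power2_eq_square)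
      moreover have "2 * (?Z * cmod (colv m c s 1 i) * cmod (colv m c s 1 l)) = ?Z * (1 + s^2) / 4"
        unfolding cmod_colv1_S[OF iS] cmod_colv1_S[OF lS] by (simp add: field_simps sq2 tt)
      moreover have "cmod (Fp m l3 z i l) = 0" using Fp_S iS by simp
      moreover have "\<bar>l1\<bar> * \<bar>w1v m i\<bar> * \<bar>w1v m l\<bar> = \<bar>l1\<bar> / 4" "\<bar>l2\<bar> * \<bar>w2v m i\<bar> * \<bar>w2v m l\<bar> = \<bar>l2\<bar> / 4"
      proof -
        have a: "\<bar>w1v m i\<bar> = 1/2" "\<bar>w2v m i\<bar> = 1/2" "\<bar>w1v m l\<bar> = 1/2" "\<bar>w2v m l\<bar> = 1/2"
          using w_S[OF iS] w_S[OF lS] by blast+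
        show "\<bar>l1\<bar> * \<bar>w1v m i\<bar> * \<bar>w1v m l\<bar> = \<bar>l1\<bar> / 4" "\<bar>l2\<bar> * \<bar>w2v m i\<bar> * \<bar>w2v m l\<bar> = \<bar>l2\<bar> / 4"
          unfolding a by simp_all
      qed
      ultimately show ?thesis using low H1 by linarith
    next
      case lT: False
      have "l0 * pv m c s i * pv m c s l - 2 * (?Z * cmod (colv m c s 1 i) * cmod (colv m c s 1 l))
          = c / (2 * sqrt ?N) * (l0 * s - ?Z * ?t)"
        unfolding cmod_colv1_S[OF iS] cmod_colv1_T[OF lT c] using iS lT by (simp add: pv_def field_simps sq2 sq2' sqm0) (simp add: add_divide_distrib[symmetric])
      also have "\<dots> \<ge> 0" using H2 c N by simp
      finally have "l0 * pv m c s i * pv m c s l - 2 * (?Z * cmod (colv m c s 1 i) * cmod (colv m c s 1 l)) \<ge> 0" .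
      moreover have "cmod (Fp m l3 z i l) = 0" using Fp_S iS by simp
      ultimately show ?thesis using low w_T[OF lT] by simp
    qed
  next
    case iT: False
    show ?thesis
    proof (cases "inS m l")
      case lS: True
      have "l0 * pv m c s i * pv m c s l - 2 * (?Z * cmod (colv m c s 1 i) * cmod (colv m c s 1 l))
          = c / (2 * sqrt ?N) * (l0 * s - ?Z * ?t)"
        unfolding cmod_colv1_S[OF lS] cmod_colv1_T[OF iT c] using lS iT by (simp add: pv_def field_simps sq2 sq2' sqm0) (simp add: add_divide_distrib[symmetric])
      also have "\<dots> \<ge> 0" using H2 c N by simp
      finally have "l0 * pv m c s i * pv m c s l - 2 * (?Z * cmod (colv m c s 1 i) * cmod (colv m c s 1 l)) \<ge> 0" .
      moreover have "cmod (Fp m l3 z i l) = 0" using Fp_S lS by simp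
      ultimately show ?thesis using low w_T[OF iT] by simp
    next
      case lT: False
      have "l0 * pv m c s i * pv m c s l - 2 * (?Z * cmod (colv m c s 1 i) * cmod (colv m c s 1 l))
          = (l0 * s^2 - ?Z * c^2) / ?N"
        unfolding cmod_colv1_T[OF lT c] cmod_colv1_T[OF iT c] using lT iT by (simp add: pv_def field_simps sq2 sqN power2_eq_square) (simp add: add_divide_distrib[symmetric])
      moreover have "cmod (Fp m l3 z i l) \<le> (\<bar>l3\<bar> + 2 * ?Y) / ?N" using Fp_T[OF m] .
      moreover have "(l0 * s^2 - ?Z * c^2) / ?N - (\<bar>l3\<bar> + 2 * ?Y) / ?N \<ge> 0"
        using H3 N by (simp add: diff_divide_distrib[symmetric])
      ultimately show ?thesis using low w_T[OF iT] w_T[OF lT] by simp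
    qed
  qed
qed

lemma inS_rev: "i < 2*m+4 \<Longrightarrow> inS m (2*m+3-i) = inS m i" by (auto simp: inS_def)

lemma Fs_periodic': "Fs m l3 z (d - int (2*m)) = Fs m l3 z d"
  using Fs_periodic[of m l3 z "d - int (2*m)"] by simp

lemma Aent_rev:
  assumes i: "i < 2*m+4" and l: "l < 2*m+4"
  shows "Aent m c s l0 l1 l2 l3 z (2*m+3-i) (2*m+3-l) = Aent m c s l0 l1 l2 l3 z i l"
proof -
  have pv: "pv m c s (2*m+3-x) = pv m c s x" if "x < 2*m+4" for x
    using inS_rev[OF that] by (simp add: pv_def)
  have w1: "w1v m (2*m+3-x) = - w1v m x" if "x < 2*m+4" for x
    using inS_rev[OF that] that
    by (auto simp: w1v_def inS_def h1_def)
  have w2: "w2v m (2*m+3-x) = - w2v m x" if "x < 2*m+4" for x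
  proof (cases "inS m x")
    case True
    then obtain j where j: "j < 4" "x = m + j" by (metis add_diff_inverse_nat inS_def less_diff_conv2 not_less add.commute)
    have "2*m+3-x = m + (3 - j)" using j by simp
    moreover have "j = 0 \<or> j = 1 \<or> j = 2 \<or> j = 3" using j by auto
    ultimately show ?thesis using j True inS_rev[OF that] by (elim disjE) (simp_all add: w2v_def h2_def inS_def)
  next
    case False thus ?thesis using inS_rev[OF that] by (simp add: w2v_def)
  qed
  have c1: "colv m c s 1 (2*m+3-x) = colv m c s 1 x" if "x < 2*m+4" for x
    using inS_rev[OF that] that
    by (auto simp: colv_def inS_def h3_def)
  have q: "qv m c s z (2*m+3-i) (2*m+3-l) = qv m c s z i l"
    unfolding qv_def c1[OF i] c1[OF l] ..
  have F: "Fp m l3 z (2*m+3-i) (2*m+3-l) = Fp m l3 z i l"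
  proof (cases "inS m i \<or> inS m l")
    case True thus ?thesis using inS_rev[OF i] inS_rev[OF l] by (simp add: Fp_def)
  next
    case False
    have g: "int (gT m (2*m+3-x)) = int (gT m x) + int m \<or> int (gT m (2*m+3-x)) = int (gT m x) - int m"
      if "x < 2*m+4" "\<not> inS m x" for x
      using that by (auto simp: gT_def inS_def)
    define D where "D = int (gT m i) - int (gT m l)"
    have "int (gT m (2*m+3-i)) - int (gT m (2*m+3-l)) = D \<or>
          int (gT m (2*m+3-i)) - int (gT m (2*m+3-l)) = D + int (2*m) \<or>
          int (gT m (2*m+3-i)) - int (gT m (2*m+3-l)) = D - int (2*m)"
      using g[OF i conjunct1[OF False[simplified]]] g[OF l conjunct2[OF False[simplified]]]
      unfolding D_def by (elim disjE) presburger+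
    hence "Fs m l3 z (int (gT m (2*m+3-i)) - int (gT m (2*m+3-l))) = Fs m l3 z D"
      using Fs_periodic[of m l3 z D] Fs_periodic'[of m l3 z D] by (elim disjE) simp_all
    thus ?thesis using False inS_rev[OF i] inS_rev[OF l] by (simp add: Fp_def D_def)
  qed
  show ?thesis unfolding Aent_def pv[OF i] pv[OF l] w1[OF i] w1[OF l] w2[OF i] w2[OF l] q F by simp
qed

lemma rev_mult_left:
  assumes A: "(A :: 'a :: comm_ring_1 mat) \<in> carrier_mat n k" and i: "i < n" and j: "j < k"
  shows "(rev_id_mat n * A) $$ (i,j) = A $$ (n-1-i, j)"
proof -
  have "(rev_id_mat n * A) $$ (i,j) = (\<Sum>t<n. (if i + t = n-1 then 1 else 0) * A $$ (t,j))"
    using A i j by (simp add: rev_id_mat_def scalar_prod_def atLeast0LessThan)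
  also have "\<dots> = (\<Sum>t<n. (if t = n-1-i then A $$ (t,j) else 0))"
    by (rule sum.cong) (use i in auto)
  also have "\<dots> = A $$ (n-1-i, j)" using i by (simp add: sum.delta)
  finally show ?thesis .
qed

lemma rev_mult_right:
  assumes A: "(A :: 'a :: comm_ring_1 mat) \<in> carrier_mat k n" and i: "i < k" and j: "j < n"
  shows "(A * rev_id_mat n) $$ (i,j) = A $$ (i, n-1-j)"
proof -
  have "(A * rev_id_mat n) $$ (i,j) = (\<Sum>t<n. A $$ (i,t) * (if t + j = n-1 then 1 else 0))"
    using A i j by (simp add: rev_id_mat_def scalar_prod_def atLeast0LessThan)
  also have "\<dots> = (\<Sum>t<n. (if t = n-1-j then A $$ (i,t) else 0))"
    by (rule sum.cong) (use j in auto)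
  also have "\<dots> = A $$ (i, n-1-j)" using j by (simp add: sum.delta)
  finally show ?thesis .
qed

lemma centro_char:
  assumes A: "(A :: 'a :: comm_ring_1 mat) \<in> carrier_mat n n"
    and sym: "\<And>i j. i < n \<Longrightarrow> j < n \<Longrightarrow> A $$ (n-1-i, n-1-j) = A $$ (i,j)"
  shows "centrosymmetric A"
proof -
  have J: "rev_id_mat n \<in> carrier_mat n n" by (simp add: rev_id_mat_def)
  have "rev_id_mat n * A * rev_id_mat n = A"
  proof (rule eq_matI)
    fix i j assume i: "i < dim_row A" and j: "j < dim_col A"
    hence i': "i < n" and j': "j < n" using A by auto
    have "(rev_id_mat n * A * rev_id_mat n) $$ (i,j) = (rev_id_mat n * A) $$ (i, n-1-j)"
      using rev_mult_right[OF mult_carrier_mat[OF J A] i' j'] .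
    also have "\<dots> = A $$ (n-1-i, n-1-j)" using rev_mult_left[OF A i'] j' by simp
    also have "\<dots> = A $$ (i,j)" using sym[OF i' j'] .
    finally show "(rev_id_mat n * A * rev_id_mat n) $$ (i,j) = A $$ (i,j)" .
  qed (use A in \<open>auto simp: rev_id_mat_def\<close>)
  thus ?thesis unfolding centrosymmetric_def using A by simp
qed

definition adj :: "complex mat \<Rightarrow> complex mat" where
  "adj M = mat (dim_col M) (dim_row M) (\<lambda>(i,j). cnj (M $$ (j,i)))"

lemma adj_carrier: "M \<in> carrier_mat a b \<Longrightarrow> adj M \<in> carrier_mat b a" by (simp add: adj_def)

lemma adj_mult:
  assumes A: "A \<in> carrier_mat a b" and B: "B \<in> carrier_mat b c"
  shows "adj (A * B) = adj B * adj A"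
  by (rule eq_matI) (use A B in \<open>auto simp: adj_def scalar_prod_def cnj_sum mult.commute\<close>)

lemma adj_adj: "adj (adj M) = M"
  by (rule eq_matI) (auto simp: adj_def)

lemma Hmat_adj: "Hmat m c s = adj (Umat m c s)"
  by (rule eq_matI) (auto simp: adj_def Hmat_def Umat_def)

lemma normal_conj:
  assumes U: "(U :: complex mat) \<in> carrier_mat n n" and H: "H \<in> carrier_mat n n" and D: "D \<in> carrier_mat n n"
    and E: "E \<in> carrier_mat n n" and HU: "H * U = 1\<^sub>m n" and DE: "D * E = E * D"
  shows "(U * D * H) * (U * E * H) = (U * E * H) * (U * D * H)"
proof -
  have gen: "(U * X * H) * (U * Y * H) = U * (X * Y) * H" if X: "X \<in> carrier_mat n n" and Y: "Y \<in> carrier_mat n n" for X Y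
  proof -
    have "(U * X * H) * (U * Y * H) = U * X * (H * (U * Y * H))"
      using U X H Y by (simp add: assoc_mult_mat[of _ n n _ n _ n])
    also have "H * (U * Y * H) = (H * U) * Y * H"
      using U Y H by (simp add: assoc_mult_mat[of _ n n _ n _ n])
    also have "\<dots> = Y * H" using HU left_mult_one_mat[OF Y] by simp
    also have "U * X * (Y * H) = U * (X * Y) * H"
      using U X H Y by (simp add: assoc_mult_mat[of _ n n _ n _ n])
    finally show ?thesis .
  qed
  show ?thesis unfolding gen[OF D E] gen[OF E D] DE ..
qed

lemma of_real_mat_mult:
  assumes A: "A \<in> carrier_mat a b" and B: "B \<in> carrier_mat b c"
  shows "map_mat complex_of_real (A * B) = map_mat complex_of_real A * map_mat complex_of_real B"
  by (rule eq_matI) (use A B in \<open>auto simp: scalar_prod_def\<close>)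

lemma diag_commute:
  "mat n n (\<lambda>(i,j). if i = j then d i else 0) * mat n n (\<lambda>(i,j). if i = j then e i else 0)
   = mat n n (\<lambda>(i,j). if i = j then e i else 0) * mat n n (\<lambda>(i,j). if i = j then (d i :: complex) else 0)"
proof (rule eq_matI)
  fix i j assume i: "i < dim_row (mat n n (\<lambda>(i,j). if i = j then e i else 0) * mat n n (\<lambda>(i,j). if i = j then (d i :: complex) else 0))"
    and j: "j < dim_col (mat n n (\<lambda>(i,j). if i = j then e i else 0) * mat n n (\<lambda>(i,j). if i = j then (d i :: complex) else 0))"
  hence i': "i < n" and j': "j < n" by auto
  show "(mat n n (\<lambda>(i,j). if i = j then d i else 0) * mat n n (\<lambda>(i,j). if i = j then e i else 0)) $$ (i,j)
    = (mat n n (\<lambda>(i,j). if i = j then e i else 0) * mat n n (\<lambda>(i,j). if i = j then (d i :: complex) else 0)) $$ (i,j)"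
    unfolding diag_mult_right[OF mat_carrier i' j'] using i' j' by (simp add: mult.commute)
qed auto

lemma adj_Lam: "adj (Lam m l0 l1 l2 l3 z) = mat (2*m+4) (2*m+4) (\<lambda>(i,j). if i = j then cnj (ev m l0 l1 l2 l3 z i) else 0)"
  by (rule eq_matI) (auto simp: adj_def Lam_def)

lemma construction:
  assumes m: "m \<ge> 1" and c: "c \<ge> 0" and s: "s \<ge> 0" and cs: "c^2 + s^2 = 1" and l0: "l0 \<ge> 0"
    and H1: "l0 * c^2 \<ge> \<bar>l1\<bar> + \<bar>l2\<bar> + cmod (z m) * (1 + s^2)"
    and H2: "l0 * s \<ge> cmod (z m) * sqrt (1 + s^2)"
    and H3: "l0 * s^2 \<ge> cmod (z m) * c^2 + \<bar>l3\<bar> + 2 * (\<Sum>j\<in>{1..<m}. cmod (z j))"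
  shows "\<exists>A :: real mat. A \<in> carrier_mat (2*m+4) (2*m+4) \<and>
           normal_real_mat A \<and> centrosymmetric A \<and> nonneg_mat A \<and>
           has_eigenvalues A
             ([complex_of_real l0, complex_of_real l1, complex_of_real l2, complex_of_real l3]
              @ map z [1..<m+1] @ map (\<lambda>j. cnj (z j)) [1..<m+1])"
proof -
  let ?n = "2*m+4"
  define A where "A = mat ?n ?n (\<lambda>(i,l). Aent m c s l0 l1 l2 l3 z i l)"
  let ?U = "Umat m c s" and ?H = "Hmat m c s" and ?L = "Lam m l0 l1 l2 l3 z"
  let ?Ac = "Ac m c s l0 l1 l2 l3 z"
  have Acar: "A \<in> carrier_mat ?n ?n" by (simp add: A_def)
  have mA: "map_mat complex_of_real A = ?Ac"
    by (rule eq_matI) (auto simp: A_def Ac_real[OF m] Ac_carrier[THEN carrier_matD(1)] Ac_carrier[THEN carrier_matD(2)])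
  have eig: "has_eigenvalues A
             ([complex_of_real l0, complex_of_real l1, complex_of_real l2, complex_of_real l3]
              @ map z [1..<m+1] @ map (\<lambda>j. cnj (z j)) [1..<m+1])"
  proof -
    have sim: "similar_mat ?Ac ?L"
      by (rule similar_matI[of _ _ ?U ?H ?n])
        (auto simp: Ac_carrier Lam_carrier Umat_carrier Hmat_carrier UH[OF m cs] HU[OF m cs], simp add: Ac_def)
    show ?thesis unfolding has_eigenvalues_def mA char_poly_similar[OF sim] charpoly_Lam
      by (rule prod_target[OF m])
  qed
  have nn: "nonneg_mat A"
    unfolding nonneg_mat_def A_def using Aent_nonneg[OF m c s l0 H1 H2 H3] by simp
  have cen: "centrosymmetric A"
  proof (rule centro_char[OF Acar])
    fix i j assume i: "i < ?n" and j: "j < ?n"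
    have e: "?n - 1 - i = 2*m+3-i" "?n - 1 - j = 2*m+3-j" by simp_all
    show "A $$ (?n - 1 - i, ?n - 1 - j) = A $$ (i,j)"
      unfolding e using i j by (simp only: A_def index_mat split) (simp add: Aent_rev[OF i j])
  qed
  have nor: "normal_real_mat A"
  proof -
    have adjA: "adj ?Ac = map_mat complex_of_real (transpose_mat A)"
      unfolding mA[symmetric] by (rule eq_matI) (auto simp: adj_def)
    have adjAc: "adj ?Ac = ?U * adj ?L * ?H"
    proof -
      have "adj ?Ac = adj ?H * adj (?U * ?L)"
        unfolding Ac_def by (rule adj_mult[OF mult_carrier_mat[OF Umat_carrier Lam_carrier] Hmat_carrier])
      also have "adj (?U * ?L) = adj ?L * adj ?U" by (rule adj_mult[OF Umat_carrier Lam_carrier])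
      also have "adj ?H = ?U" unfolding Hmat_adj adj_adj ..
      also have "adj ?U = ?H" unfolding Hmat_adj ..
      finally show ?thesis
        using Umat_carrier Hmat_carrier adj_carrier[OF Lam_carrier]
        by (simp add: assoc_mult_mat[of _ ?n ?n _ ?n _ ?n])
    qed
    have comm: "?Ac * adj ?Ac = adj ?Ac * ?Ac"
      unfolding adjAc unfolding Ac_def
      by (rule normal_conj[OF Umat_carrier Hmat_carrier Lam_carrier adj_carrier[OF Lam_carrier] HU[OF m cs]])
         (unfold adj_Lam, unfold Lam_def, rule diag_commute)
    have T: "transpose_mat A \<in> carrier_mat ?n ?n" using Acar by simp
    have "map_mat complex_of_real (A * transpose_mat A) = map_mat complex_of_real (transpose_mat A * A)"
      unfolding of_real_mat_mult[OF Acar T] of_real_mat_mult[OF T Acar] adjA[symmetric] mA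
      by (rule comm)
    hence "A * transpose_mat A = transpose_mat A * A"
      by (metis (no_types, lifting) of_real_eq_iff index_map_mat(1) eq_matI index_map_mat(2) index_map_mat(3))
    thus ?thesis unfolding normal_real_mat_def .
  qed
  show ?thesis using Acar nor cen nn eig by blast
qed

theorem theorem3p14:
  fixes m :: nat and l0 l1 l2 l3 :: real and z :: "nat \<Rightarrow> complex"
  assumes "m \<ge> 1"
    and "l0 \<ge> 0" and "0 > l1" and "l1 \<ge> l2" and "l2 \<ge> l3"
    and "\<forall>j\<in>{1..m}. Im (z j) > 0"
    and "l0 + l1 + l2 + l3 - 2 * (\<Sum>j=1..m. cmod (z j)) \<ge> 0"
  shows "\<exists>A :: real mat. A \<in> carrier_mat (2*m+4) (2*m+4) \<and>
           normal_real_mat A \<and> centrosymmetric A \<and> nonneg_mat A \<and>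
           has_eigenvalues A
             ([complex_of_real l0, complex_of_real l1, complex_of_real l2, complex_of_real l3]
              @ map z [1..<m+1] @ map (\<lambda>j. cnj (z j)) [1..<m+1])"
proof -
  note m = assms(1) and l0 = assms(2)
  define Y where "Y = (\<Sum>j\<in>{1..<m}. cmod (z j))"
  define Z where "Z = cmod (z m)"
  have Y0: "Y \<ge> 0" unfolding Y_def by (simp add: sum_nonneg)
  have "Im (z m) > 0" using assms(6) m by simp
  hence Zp: "Z > 0" unfolding Z_def by (metis zero_less_norm_iff zero_complex.sel(2) less_irrefl)
  have sumsplit: "(\<Sum>j=1..m. cmod (z j)) = Y + Z"
  proof -
    have "{1..m} = insert m {1..<m}" using m by auto
    thus ?thesis unfolding Y_def Z_def by (simp add: add.commute)
  qed
  have a1: "\<bar>l1\<bar> = - l1" "\<bar>l2\<bar> = - l2" "\<bar>l3\<bar> = - l3" using assms(3-5) by auto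
  have big: "l0 \<ge> \<bar>l1\<bar> + \<bar>l2\<bar> + \<bar>l3\<bar> + 2*Y + 2*Z" using assms(7) sumsplit a1 by linarith
  have L1p: "\<bar>l1\<bar> > 0" using assms(3) by simp
  define \<sigma> where "\<sigma> = (\<bar>l3\<bar> + 2*Y + Z) / (l0 + Z)"
  have den: "l0 + Z > 0" using l0 Zp by linarith
  have \<sigma>0: "\<sigma> \<ge> 0" unfolding \<sigma>_def using den Y0 Zp by (intro divide_nonneg_pos) auto
  have \<sigma>1: "\<sigma> \<le> 1" unfolding \<sigma>_def
    using big L1p Y0 Zp abs_ge_zero[of l2] by (subst divide_le_eq_1_pos[OF den]) linarith
  have \<sigma>eq: "\<sigma> * (l0 + Z) = \<bar>l3\<bar> + 2*Y + Z" unfolding \<sigma>_def using den by simp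
  define s where "s = sqrt \<sigma>"
  define c where "c = sqrt (1 - \<sigma>)"
  have s2: "s^2 = \<sigma>" unfolding s_def using \<sigma>0 by simp
  have c2: "c^2 = 1 - \<sigma>" unfolding c_def using \<sigma>1 by simp
  have cs: "c^2 + s^2 = 1" using s2 c2 by simp
  have c0: "c \<ge> 0" and s0: "s \<ge> 0" unfolding c_def s_def using \<sigma>0 \<sigma>1 by auto
  have H1: "l0 * c^2 \<ge> \<bar>l1\<bar> + \<bar>l2\<bar> + cmod (z m) * (1 + s^2)"
    unfolding c2 s2 Z_def[symmetric] using \<sigma>eq big by (simp add: algebra_simps)
  have H3: "l0 * s^2 \<ge> cmod (z m) * c^2 + \<bar>l3\<bar> + 2 * (\<Sum>j\<in>{1..<m}. cmod (z j))"
    unfolding c2 s2 Z_def[symmetric] Y_def[symmetric] using \<sigma>eq by (simp add: algebra_simps)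
  have H2: "l0 * s \<ge> cmod (z m) * sqrt (1 + s^2)"
  proof -
    have \<sigma>Z: "\<sigma> * (l0 + Z) \<ge> Z" using \<sigma>eq Y0 by simp
    have lZ: "l0 - Z \<ge> Z" using big L1p Y0 by simp
    have "Z^2 * (1 + \<sigma>) \<le> l0^2 * \<sigma>"
    proof -
      have "Z * Z \<le> Z * (l0 - Z)" using lZ Zp by (intro mult_left_mono) auto
      also have "\<dots> \<le> (\<sigma> * (l0 + Z)) * (l0 - Z)" using \<sigma>Z lZ Zp by (intro mult_right_mono) auto
      also have "\<dots> = l0^2 * \<sigma> - Z^2 * \<sigma>" by (simp add: power2_eq_square algebra_simps)
      finally show ?thesis by (simp add: power2_eq_square algebra_simps)
    qed
    hence "sqrt (Z^2 * (1 + \<sigma>)) \<le> sqrt (l0^2 * \<sigma>)" by (rule real_sqrt_le_mono)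
    thus ?thesis unfolding Z_def[symmetric] s2 unfolding s_def using l0 Zp
      by (simp add: real_sqrt_mult)
  qed
  show ?thesis by (rule construction[OF m c0 s0 cs l0 H1 H2 H3])
qed

end
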